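(* Let $L>0$, $D>0$, $s_0\ge0$, $X=[-D/2,D/2]$, and consider the class of problems $\min_{x\in X}g_{t,d,s}(x)$ indexed by $t\ne0$ with $|t|<\frac12L^{1/2}[2(D+s_0)]^{-1/2}$, $d=D/2$ if $t>0$ and $d=-D/2$ if $t<0$, $s=s_0$, where $f_{t,d,s}(x)=t(d-x)$, $\alpha=|t|^{4/3}L^{-2/3}[2(D+s)]^{2/3}$, the stochastic first-order oracle returns $(F_{t,d,s}(x,\xi),F'_{t,d,s}(x,\xi))=\big(-\frac{|t|s}{2(1-\alpha)},0\big)$ with probability $1-\alpha$ and $\frac1\alpha\big(f_{t,d,s}(x)+\frac{|t|s}2,f'_{t,d,s}(x)\big)$ with probability $\alpha$, and $g_{t,d,s}(x)=\mathbb{E}[(F_{t,d,s}(x,\xi)-f_{t,d,s}(x))_+^2]$. Then any method with a deterministic rule for the sample trajectories requires at least $N\ge\Omega(L^2D^2\epsilon^{-2})$ oracle samples to find an $\epsilon$-optimal solution for this class of problems $\min_{x\in X}g_{t,d,s}(x)$.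
   Context: $(a)_+=\max\{a,0\}$. A point $\tilde x$ is $\epsilon$-optimal for $\min_Xg$ if $\mathbb{E}[g(\tilde x)]-\min_Xg\le\epsilon$. A method with a deterministic rule for the sample trajectories sequentially queries the oracle from a given initial point, each query point and the output being deterministic functions of the initial point and the oracle answers received so far; it is required to succeed on every problem of the class. *)

theory Defs
  imports Complex_Main
begin

definition Xset :: "real \<Rightarrow> real set" where
  "Xset D = {-D/2 .. D/2}"

definition alpha :: "real \<Rightarrow> real \<Rightarrow> real \<Rightarrow> real \<Rightarrow> real" where
  "alpha L D s t = \<bar>t\<bar> powr (4/3) * L powr (-2/3) * (2 * (D + s)) powr (2/3)"

definition fobj :: "real \<Rightarrow> real \<Rightarrow> real \<Rightarrow> real" where
  "fobj t d x = t * (d - x)"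

definition fderiv :: "real \<Rightarrow> real \<Rightarrow> real \<Rightarrow> real" where
  "fderiv t d x = - t"

(* Stochastic first-order oracle (SFO). The sample xi is a boolean:
  True (probability alpha) / False (probability 1 - alpha).
  Returns (F(x,xi), F'(x,xi)). *)
definition sfo :: "real \<Rightarrow> real \<Rightarrow> real \<Rightarrow> real \<Rightarrow> real \<Rightarrow> real \<Rightarrow> bool \<Rightarrow> real \<times> real" where
  "sfo L D s t d x xi =
     (let a = alpha L D s t in
      if xi then ((fobj t d x + \<bar>t\<bar> * s / 2) / a, fderiv t d x / a)
      else (- (\<bar>t\<bar> * s) / (2 * (1 - a)), 0))"

definition sprob :: "real \<Rightarrow> bool \<Rightarrow> real" where
  "sprob a xi = (if xi then a else 1 - a)"

definition gobj :: "real \<Rightarrow> real \<Rightarrow> real \<Rightarrow> real \<Rightarrow> real \<Rightarrow> real \<Rightarrow> real" where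
  "gobj L D s t d x =
     (\<Sum>xi\<in>(UNIV::bool set). sprob (alpha L D s t) xi *
        (max (fst (sfo L D s t d x xi) - fobj t d x) 0)^2)"

(* A method with a deterministic rule: the next query point is a deterministic
  function Q of the sfo answers received so far (the initial point being fixed
  inside Q), and the output is a deterministic function Out of all answers. *)
fun traj :: "((real \<times> real) list \<Rightarrow> real) \<Rightarrow> (real \<Rightarrow> bool \<Rightarrow> real \<times> real)
             \<Rightarrow> (real \<times> real) list \<Rightarrow> bool list \<Rightarrow> (real \<times> real) list" where
  "traj Q orc hist [] = hist"
| "traj Q orc hist (xi # xis) = traj Q orc (hist @ [orc (Q hist) xi]) xis"

definition expected_out ::
  "((real \<times> real) list \<Rightarrow> real) \<Rightarrow> ((real \<times> real) list \<Rightarrow> real) \<Rightarrow> nat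
    \<Rightarrow> real \<Rightarrow> real \<Rightarrow> real \<Rightarrow> real \<Rightarrow> real \<Rightarrow> real" where
  "expected_out Q Out N L D s t d =
     (\<Sum>xis\<in>{xis::bool list. length xis = N}.
        (\<Prod>xi\<leftarrow>xis. sprob (alpha L D s t) xi) *
        gobj L D s t d (Out (traj Q (sfo L D s t d) [] xis)))"

definition eps_optimal ::
  "((real \<times> real) list \<Rightarrow> real) \<Rightarrow> ((real \<times> real) list \<Rightarrow> real) \<Rightarrow> nat
    \<Rightarrow> real \<Rightarrow> real \<Rightarrow> real \<Rightarrow> real \<Rightarrow> real \<Rightarrow> real \<Rightarrow> bool" where
  "eps_optimal Q Out N L D s t d \<epsilon> \<longleftrightarrow>
     expected_out Q Out N L D s t d - (INF x\<in>Xset D. gobj L D s t d x) \<le> \<epsilon>"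

definition in_class :: "real \<Rightarrow> real \<Rightarrow> real \<Rightarrow> real \<Rightarrow> bool" where
  "in_class L D s0 t \<longleftrightarrow> t \<noteq> 0 \<and> \<bar>t\<bar> < 1/2 * sqrt L * (2 * (D + s0)) powr (-1/2)"

definition dpar :: "real \<Rightarrow> real \<Rightarrow> real" where
  "dpar D t = (if t > 0 then D/2 else - D/2)"

end

theory Submission
  imports Defs
begin

lemma bool_lists_eq: "{xs::bool list. length xs = n} = {xs. set xs \<subseteq> UNIV \<and> length xs = n}" by simp

lemma fin_lists: "finite {xs::bool list. length xs = n}"
  using finite_lists_length_eq[of "UNIV::bool set" n] by simp

lemma sum_prob: "(\<Sum>xs\<in>{xs::bool list. length xs = N}. (\<Prod>xi\<leftarrow>xs. sprob a xi)) = 1"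
proof (induction N)
  case 0
  then show ?case by simp
next
  case (Suc n)
  have eq: "{xs::bool list. length xs = Suc n} = (\<lambda>(xs, b). b#xs) ` ({xs. length xs = n} \<times> UNIV)"
    using lists_length_Suc_eq[of "UNIV::bool set" n] by simp
  have inj: "inj_on (\<lambda>(xs, b::bool). b#xs) ({xs. length xs = n} \<times> UNIV)"
    by (auto simp: inj_on_def)
  have "(\<Sum>xs\<in>{xs::bool list. length xs = Suc n}. (\<Prod>xi\<leftarrow>xs. sprob a xi))
      = (\<Sum>p\<in>{xs::bool list. length xs = n} \<times> UNIV. (\<Prod>xi\<leftarrow>(snd p # fst p). sprob a xi))"
    unfolding eq by (subst sum.reindex[OF inj]) (auto intro!: sum.cong)
  also have "\<dots> = (\<Sum>xs\<in>{xs::bool list. length xs = n}. \<Sum>b\<in>UNIV. sprob a b * (\<Prod>xi\<leftarrow>xs. sprob a xi))"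
    by (simp add: sum.cartesian_product case_prod_beta)
  also have "\<dots> = (\<Sum>xs\<in>{xs::bool list. length xs = n}. (\<Prod>xi\<leftarrow>xs. sprob a xi))"
    by (simp add: UNIV_bool sprob_def algebra_simps)
  finally show ?case using Suc by simp
qed

lemma prob_nonneg: "0 \<le> a \<Longrightarrow> a \<le> 1 \<Longrightarrow> 0 \<le> (\<Prod>xi\<leftarrow>xs. sprob a xi)"
  by (induction xs) (auto simp: sprob_def)

lemma traj_false: "(\<forall>x. pa x False = pb x False) \<Longrightarrow> set xs \<subseteq> {False} \<Longrightarrow>
   traj Q pa h xs = traj Q pb h xs"
  by (induction xs arbitrary: h) auto

lemma g_formula:
  assumes "0 < a" "a < 1" "alpha L D s t = a" "0 \<le> fobj t d x" "s \<ge> 0"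
  shows "gobj L D s t d x = ((1-a) * fobj t d x + \<bar>t\<bar>*s/2)^2 / a"
proof -
  let ?f = "fobj t d x"
  have F: "max (- (\<bar>t\<bar> * s) / (2 * (1 - a)) - ?f) 0 = 0"
  proof -
    have "- (\<bar>t\<bar> * s) / (2 * (1 - a)) \<le> 0" using assms by (simp add: divide_nonpos_pos)
    thus ?thesis using assms(4) by (simp only: max_def) auto
  qed
  have T: "(?f + \<bar>t\<bar> * s / 2) / a - ?f = ((1-a) * ?f + \<bar>t\<bar>*s/2) / a"
    using assms by (simp add: field_simps)
  have T2: "max (((1-a) * ?f + \<bar>t\<bar>*s/2) / a) 0 = ((1-a) * ?f + \<bar>t\<bar>*s/2) / a"
    using assms by simp
  have E: "gobj L D s t d x = a * (max ((?f + \<bar>t\<bar> * s / 2) / a - ?f) 0)^2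
       + (1-a) * (max (- (\<bar>t\<bar> * s) / (2 * (1 - a)) - ?f) 0)^2"
    by (simp add: gobj_def UNIV_bool sprob_def sfo_def Let_def assms(3) fderiv_def)
  show ?thesis unfolding E F T T2 using assms by (simp add: power2_eq_square)
qed

lemma fobj_nonneg:
  assumes "t \<noteq> 0" "x \<in> Xset D"
  shows "0 \<le> fobj t (dpar D t) x"
  using assms by (cases "t > 0") (auto simp: fobj_def dpar_def Xset_def mult_le_0_iff zero_le_mult_iff)

lemma dpar_in: "D > 0 \<Longrightarrow> dpar D t \<in> Xset D"
  by (auto simp: dpar_def Xset_def)

lemma one_side:
  fixes t t' a L D s \<epsilon> x0 :: real and N :: nat
  assumes tpos: "\<bar>t'\<bar> = t" "t > 0" and a: "0 < a" "a < 1" "alpha L D s t' = a"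
    and D: "D > 0" and s: "s \<ge> 0"
    and Out: "\<forall>h. Out h \<in> Xset D"
    and opt: "eps_optimal Q Out N L D s t' (dpar D t') \<epsilon>"
    and x0: "x0 = Out (traj Q (sfo L D s t' (dpar D t')) [] (replicate N False))"
    and big: "fobj t' (dpar D t') x0 \<ge> t * D / 2"
  shows "\<epsilon> \<ge> (1-a)^N * ((1-a)^2 * t^2 / a * (D*(D+2*s)/4))"
proof -
  define d where "d = dpar D t'"
  define G where "G = gobj L D s t' d"
  define f where "f = fobj t' d"
  define m where "m = (t*s/2)^2 / a"
  have t'0: "t' \<noteq> 0" using tpos by auto
  have fnn: "\<And>x. x \<in> Xset D \<Longrightarrow> 0 \<le> f x" unfolding f_def d_def using fobj_nonneg[OF t'0] by blast
  have Gf: "\<And>x. x \<in> Xset D \<Longrightarrow> G x = ((1-a) * f x + t*s/2)^2 / a"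
    unfolding G_def f_def using g_formula[OF a, of d] fnn[unfolded f_def] s tpos by auto
  have fd: "f d = 0" by (simp add: f_def fobj_def)
  have dX: "d \<in> Xset D" unfolding d_def using dpar_in[OF D] .
  have Gd: "G d = m" using Gf[OF dX] fd by (simp add: m_def)
  have Gge: "G x \<ge> m" if "x \<in> Xset D" for x
  proof -
    have "t*s/2 \<le> (1-a) * f x + t*s/2" using fnn[OF that] a by simp
    moreover have "0 \<le> t*s/2" using tpos s by simp
    ultimately have "(t*s/2)^2 \<le> ((1-a) * f x + t*s/2)^2" by (rule power_mono)
    thus ?thesis using Gf[OF that] a by (simp add: m_def divide_right_mono)
  qed
  have INF: "(INF x\<in>Xset D. G x) \<le> m"
  proof -
    have "bdd_below (G ` Xset D)" using Gge by (auto simp: bdd_below_def)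
    hence "(INF x\<in>Xset D. G x) \<le> G d" using dX by (rule cINF_lower)
    thus ?thesis using Gd by simp
  qed
  define P where "P = (\<lambda>xs::bool list. (\<Prod>xi\<leftarrow>xs. sprob a xi))"
  define out where "out = (\<lambda>xs. Out (traj Q (sfo L D s t' d) [] xs))"
  define A where "A = {xs::bool list. length xs = N}"
  have P0: "\<And>xs. P xs \<ge> 0" unfolding P_def using prob_nonneg a by simp
  have EO: "expected_out Q Out N L D s t' d = (\<Sum>xs\<in>A. P xs * G (out xs))"
    unfolding expected_out_def P_def G_def out_def A_def a(3) ..
  have S1: "(\<Sum>xs\<in>A. P xs * G (out xs)) = (\<Sum>xs\<in>A. P xs * m) + (\<Sum>xs\<in>A. P xs * (G (out xs) - m))"
    by (simp add: sum.distrib[symmetric] algebra_simps)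
  have S2: "(\<Sum>xs\<in>A. P xs * m) = m"
    using sum_prob[where N=N and a=a] by (simp add: P_def A_def sum_distrib_right[symmetric])
  have S3: "(\<Sum>xs\<in>A. P xs * (G (out xs) - m)) \<ge> P (replicate N False) * (G x0 - m)"
  proof -
    have "P (replicate N False) * (G (out (replicate N False)) - m) \<le> (\<Sum>xs\<in>A. P xs * (G (out xs) - m))"
      by (rule member_le_sum) (auto simp: A_def fin_lists P0 out_def Gge Out)
    moreover have "out (replicate N False) = x0" using x0 by (simp add: out_def d_def)
    ultimately show ?thesis by simp
  qed
  have E1: "expected_out Q Out N L D s t' d \<ge> m + P (replicate N False) * (G x0 - m)"
    using EO S1 S2 S3 by simp
  have PN: "P (replicate N False) = (1-a)^N" by (simp add: P_def sprob_def prod_list_replicate)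
  have x0X: "x0 \<in> Xset D" using x0 Out by simp
  have fx0: "f x0 \<ge> t*D/2" using big by (simp add: f_def d_def)
  have "G x0 - m = (((1-a) * f x0 + t*s/2)^2 - (t*s/2)^2) / a"
    using Gf[OF x0X] by (simp add: m_def diff_divide_distrib)
  also have "\<dots> = ((1-a)^2 * (f x0)^2 + (1-a) * f x0 * t * s) / a"
    by (rule arg_cong[where f="\<lambda>u. u / a"]) (simp add: power2_eq_square field_simps)
  also have "\<dots> \<ge> ((1-a)^2 * (t*D/2)^2 + (1-a)^2 * (t*D/2) * t * s) / a"
  proof -
    have h0: "0 \<le> t*D/2" using tpos D by simp
    have h1: "(t*D/2)^2 \<le> (f x0)^2" using power_mono[OF fx0 h0] .
    have h2: "(1-a)^2 * (t*D/2) * t * s \<le> (1-a) * f x0 * t * s"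
    proof -
      have "(1-a)^2 * (t*D/2) \<le> (1-a) * (t*D/2)" using a h0 by (simp add: power2_eq_square mult_right_le_one_le mult_le_cancel_right1 mult_left_le_one_le)
      also have "\<dots> \<le> (1-a) * f x0" using fx0 a by simp
      finally have "(1-a)^2 * (t*D/2) * (t*s) \<le> (1-a) * f x0 * (t*s)"
        using tpos s by (intro mult_right_mono) auto
      thus ?thesis by (simp add: mult.assoc)
    qed
    have "(1-a)^2 * (t*D/2)^2 + (1-a)^2 * (t*D/2) * t * s \<le> (1-a)^2 * (f x0)^2 + (1-a) * f x0 * t * s"
      using h1 h2 by (simp add: add_mono mult_left_mono)
    thus ?thesis using a by (simp add: divide_right_mono)
  qed
  finally have G1: "G x0 - m \<ge> ((1-a)^2 * (t*D/2)^2 + (1-a)^2 * (t*D/2) * t * s) / a" .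
  have "((1-a)^2 * (t*D/2)^2 + (1-a)^2 * (t*D/2) * t * s) / a = ((1-a)^2 * t^2 * (D*(D+2*s)/4)) / a"
    by (rule arg_cong[where f="\<lambda>u. u / a"]) (simp add: power2_eq_square field_simps)
  with G1 have G2: "G x0 - m \<ge> (1-a)^2 * t^2 / a * (D*(D+2*s)/4)" by (simp add: mult.commute mult.left_commute times_divide_eq_left)
  have "\<epsilon> \<ge> expected_out Q Out N L D s t' d - (INF x\<in>Xset D. G x)"
    using opt by (simp add: eps_optimal_def G_def d_def)
  hence "\<epsilon> \<ge> (1-a)^N * (G x0 - m)" using E1 INF PN by simp
  moreover have "(1-a)^N * (G x0 - m) \<ge> (1-a)^N * ((1-a)^2 * t^2 / a * (D*(D+2*s)/4))"
    using G2 a by (intro mult_left_mono) auto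
  ultimately show ?thesis by linarith
qed

lemma both_sides:
  fixes t a L D s \<epsilon> :: real and N :: nat
  assumes t: "t > 0" and a: "0 < a" "a < 1" "alpha L D s t = a"
    and D: "D > 0" and s: "s \<ge> 0"
    and Out: "\<forall>h. Out h \<in> Xset D"
    and opt1: "eps_optimal Q Out N L D s t (dpar D t) \<epsilon>"
    and opt2: "eps_optimal Q Out N L D s (-t) (dpar D (-t)) \<epsilon>"
  shows "\<epsilon> \<ge> (1-a)^N * ((1-a)^2 * t^2 / a * (D*(D+2*s)/4))"
proof -
  have a2: "alpha L D s (-t) = a" using a(3) by (simp add: alpha_def)
  have same: "\<forall>x. sfo L D s t (dpar D t) x False = sfo L D s (-t) (dpar D (-t)) x False"
    by (simp add: sfo_def Let_def alpha_def)
  define x0 where "x0 = Out (traj Q (sfo L D s t (dpar D t)) [] (replicate N False))"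
  have x0': "x0 = Out (traj Q (sfo L D s (-t) (dpar D (-t))) [] (replicate N False))"
    unfolding x0_def using traj_false[where pa="sfo L D s t (dpar D t)" and pb="sfo L D s (-t) (dpar D (-t))" and xs="replicate N False" and Q=Q and h="[]", OF same]
    by (simp add: set_replicate_conv_if)
  have dp: "dpar D t = D/2" "dpar D (-t) = -D/2" using t by (auto simp: dpar_def)
  have "fobj t (dpar D t) x0 + fobj (-t) (dpar D (-t)) x0 = t * D"
    unfolding dp by (simp add: fobj_def algebra_simps)
  hence "fobj t (dpar D t) x0 \<ge> t * D / 2 \<or> fobj (-t) (dpar D (-t)) x0 \<ge> t * D / 2" by linarith
  thus ?thesis
  proof
    assume "fobj t (dpar D t) x0 \<ge> t * D / 2"
    thus ?thesis using one_side[of t t a L D s Out Q N \<epsilon> x0] t a D s Out opt1 x0_def by simp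
  next
    assume "fobj (-t) (dpar D (-t)) x0 \<ge> t * D / 2"
    thus ?thesis using one_side[of "-t" t a L D s Out Q N \<epsilon> x0] t a a2 D s Out opt2 x0' by simp
  qed
qed

lemma alpha_choice:
  fixes a L D s :: real
  assumes "0 < a" "L > 0" "D + s > 0"
  shows "alpha L D s (sqrt (a * sqrt a * L / (2*(D+s)))) = a"
proof -
  define K where "K = 2*(D+s)"
  have K: "K > 0" using assms by (simp add: K_def)
  have "sqrt (a * sqrt a * L / K) = (a powr (3/2) * (L / K)) powr (1/2)"
  proof -
    have h: "(3/2::real) = 1 + 1/2" by simp
    have "a powr (3/2) = a powr (1 + 1/2)" by (subst h) (rule refl)
    also have "\<dots> = a * sqrt a" using assms by (subst powr_add) (simp add: powr_half_sqrt)
    finally have "a * sqrt a = a powr (3/2)" by simp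
    thus ?thesis using assms K by (simp add: powr_half_sqrt)
  qed
  hence "\<bar>sqrt (a * sqrt a * L / K)\<bar> powr (4/3) = (a powr (3/2) * (L / K)) powr (2/3)"
    using assms K by (simp add: powr_powr)
  also have "\<dots> = a * (L powr (2/3) / K powr (2/3))"
    using assms K by (simp add: powr_mult powr_powr powr_divide)
  finally have e: "\<bar>sqrt (a * sqrt a * L / K)\<bar> powr (4/3) = a * (L powr (2/3) / K powr (2/3))" .
  have "L powr (2/3) * L powr (-2/3) = 1" using assms by (simp add: powr_add[symmetric])
  thus ?thesis unfolding alpha_def K_def[symmetric] e using K
    by (simp add: field_simps)
qed

lemma class_choice:
  fixes a L D s :: real
  assumes "0 < a" "a \<le> 1/8" "L > 0" "D + s > 0"
  shows "in_class L D s (sqrt (a * sqrt a * L / (2*(D+s))))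
       \<and> in_class L D s (- sqrt (a * sqrt a * L / (2*(D+s))))"
proof -
  define K where "K = 2*(D+s)"
  have K: "K > 0" using assms by (simp add: K_def)
  have sa: "sqrt a \<le> 1" using assms by simp
  have "a * sqrt a \<le> a" using sa assms by (simp add: mult_left_le)
  hence "a * sqrt a < 1/4" using assms by linarith
  hence q0: "sqrt (a * sqrt a) < sqrt ((1/2)^2)" by (simp add: power2_eq_square)
  have q: "sqrt (a * sqrt a) < 1/2" using q0 by simp
  have e: "sqrt (a * sqrt a * L / K) = sqrt (a * sqrt a) * (sqrt L / sqrt K)"
    by (simp add: real_sqrt_mult real_sqrt_divide)
  have kp: "K powr (-1/2) = 1 / sqrt K"
  proof -
    have "(-1/2::real) = - (1/2)" by simp
    hence h: "K powr (-1/2) = inverse (K powr (1/2))" by (simp add: powr_minus)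
    have k1: "K powr (1/2) = sqrt K" using K by (simp add: powr_half_sqrt)
    from h k1 show ?thesis by (simp only: inverse_eq_divide)
  qed
  have pos: "0 < sqrt L / sqrt K" using assms K by simp
  have "sqrt (a * sqrt a * L / K) < 1/2 * (sqrt L / sqrt K)"
    unfolding e using mult_strict_right_mono[OF q pos] by simp
  moreover have "sqrt (a * sqrt a * L / K) \<noteq> 0" using assms K by simp
  moreover have "0 \<le> a * sqrt a * L / K" using assms K by simp
  ultimately show ?thesis unfolding in_class_def K_def[symmetric] kp by simp
qed

theorem lemma12:
  shows "\<exists>c>0. \<exists>c0>0. \<forall>L D s0 \<epsilon>. L > 0 \<longrightarrow> D > 0 \<longrightarrow> s0 \<ge> 0 \<longrightarrow> \<epsilon> > 0 \<longrightarrow>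
      \<epsilon> \<le> c0 * L * D \<longrightarrow>
      (\<forall>(Q :: (real \<times> real) list \<Rightarrow> real) (Out :: (real \<times> real) list \<Rightarrow> real) (N :: nat).
         (\<forall>h. Out h \<in> Xset D) \<longrightarrow>
         (\<forall>t. in_class L D s0 t \<longrightarrow> eps_optimal Q Out N L D s0 t (dpar D t) \<epsilon>) \<longrightarrow>
         real N \<ge> c * L^2 * D^2 / \<epsilon>^2)"
proof -
  have main: "real N \<ge> 1/2000 * L^2 * D^2 / \<epsilon>^2"
    if L: "L > 0" and D: "D > 0" and s0: "s0 \<ge> 0" and e: "\<epsilon> > 0" and ec: "\<epsilon> \<le> 1/64 * L * D"
      and Out: "\<forall>h. Out h \<in> Xset D"
      and opt: "\<forall>t. in_class L D s0 t \<longrightarrow> eps_optimal Q Out N L D s0 t (dpar D t) \<epsilon>"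
    for L D s0 \<epsilon> and Q Out :: "(real \<times> real) list \<Rightarrow> real" and N :: nat
  proof -
    define a where "a = 1/(8*(real N+1))"
    define t where "t = sqrt (a * sqrt a * L / (2*(D+s0)))"
    have a0: "0 < a" "a \<le> 1/8" "a < 1" by (auto simp: a_def field_simps)
    have Ds: "D + s0 > 0" using D s0 by simp
    have al: "alpha L D s0 t = a" unfolding t_def by (rule alpha_choice[OF a0(1) L Ds])
    have cl: "in_class L D s0 t" "in_class L D s0 (-t)"
      using class_choice[OF a0(1) a0(2) L Ds] unfolding t_def by auto
    have tpos: "t > 0" unfolding t_def using a0 L Ds by simp
    have bound: "\<epsilon> \<ge> (1-a)^N * ((1-a)^2 * t^2 / a * (D*(D+2*s0)/4))"
      using both_sides[OF tpos a0(1) a0(3) al D s0 Out] opt cl by blast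
    have bern0: "1 + real (N+2) * (-a) \<le> (1 + (-a))^(N+2)"
      by (rule Bernoulli_inequality) (use a0 in simp)
    have "real (N+2) * a \<le> 1/4" by (simp add: a_def field_simps)
    hence bern: "(1-a)^(N+2) \<ge> 3/4" using bern0 by simp
    have t2: "t^2 = a * sqrt a * L / (2*(D+s0))" unfolding t_def
      using a0 L Ds by (simp add: real_sqrt_pow2)
    have R: "(1-a)^N * ((1-a)^2 * t^2 / a * (D*(D+2*s0)/4))
        = (1-a)^(N+2) * (sqrt a * L * (D * (D+2*s0) / (8 * (D+s0))))"
    proof -
      have gen: "a * sqrt a * L / K / a = sqrt a * L / K" for K :: real
        using a0 by (simp add: field_split_simps)
      have ta: "t^2/a = sqrt a * L / (2*(D+s0))" unfolding t2 by (rule gen)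
      have R1: "(1-a)^N * ((1-a)^2 * t^2 / a * X) = (1-a)^(N+2) * (t^2/a * X)" for X
        by (simp add: power_add mult_ac power2_eq_square)
      have R2: "sqrt a * L / (2*(D+s0)) * (D*(D+2*s0)/4) = sqrt a * L * (D * (D+2*s0) / (8 * (D+s0)))"
        using Ds by (simp add: field_simps)
      show ?thesis unfolding R1 ta R2 ..
    qed
    have Dq: "D * (D+2*s0) / (8 * (D+s0)) \<ge> D/8"
      using D s0 Ds by (simp add: field_simps)
    define y where "y = sqrt a * L * D"
    have y0: "y \<ge> 0" using a0 L D by (simp add: y_def)
    have "sqrt a * L * (D * (D+2*s0) / (8 * (D+s0))) \<ge> sqrt a * L * (D/8)"
      using Dq a0 L by (intro mult_left_mono) auto
    then have "(1-a)^(N+2) * (sqrt a * L * (D * (D+2*s0) / (8 * (D+s0)))) \<ge> 3/4 * (sqrt a * L * (D/8))"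
    proof (rule mult_mono[OF bern])
      show "0 \<le> (1-a)^(N+2)" using a0 by simp
      show "0 \<le> sqrt a * L * (D/8)" using a0 L D by simp
    qed
    moreover have "3/4 * (sqrt a * L * (D/8)) = 3/32 * y" by (simp add: y_def)
    ultimately have ey: "\<epsilon> \<ge> 3/32 * y" using bound R by linarith
    hence "\<epsilon>^2 \<ge> (3/32 * y)^2" using y0 by (intro power_mono) auto
    moreover have "y^2 = a * L^2 * D^2" using a0 by (simp add: y_def power_mult_distrib)
    moreover have "(3/32 * y)^2 = 9/1024 * y^2" by (simp add: power2_eq_square)
    ultimately have e2: "\<epsilon>^2 \<ge> 9/1024 * (a * L^2 * D^2)" by simp
    define Z where "Z = L^2 * D^2"
    have Z0: "Z > 0" using L D by (simp add: Z_def)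
    have e2': "(real N + 1) * \<epsilon>^2 \<ge> 9/8192 * Z"
      using e2 by (simp add: a_def Z_def field_simps)
    have "\<epsilon>^2 \<le> (1/64 * L * D)^2" using ec e by (intro power_mono) auto
    moreover have "(1/64 * L * D)^2 = Z / 4096" by (simp add: Z_def power2_eq_square)
    ultimately have e3: "\<epsilon>^2 \<le> Z / 4096" by simp
    have "(real N + 1) * (Z/4096) \<ge> 9/8192 * Z"
      using e2' e3 by (meson mult_left_mono of_nat_0_le_iff order_trans add_nonneg_nonneg zero_le_one)
    hence "real N + 1 \<ge> 9/2" using Z0 by (simp add: field_simps)
    hence N1: "real N \<ge> 1" by simp
    have "real N * \<epsilon>^2 \<ge> 1/2000 * Z"
    proof -
      have "real N * \<epsilon>^2 \<ge> (real N + 1) / 2 * \<epsilon>^2"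
        using N1 by (intro mult_right_mono) auto
      thus ?thesis using e2' Z0 by (simp add: field_simps)
    qed
    thus ?thesis using e by (simp add: Z_def field_simps)
  qed
  have "(1/2000::real) > 0" "(1/64::real) > 0" by auto
  thus ?thesis using main by blast
qed

end
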